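(* Let $M \in \mathbb{Z}^{\ell \times m}$ have full column rank and let $F \in \mathbb{Z}^{n \times m}$. Then the $(\ell+n)\times(m+n)$ integer matrix $$\begin{bmatrix} M & 0 \\ F & I_n \end{bmatrix}$$ has full column rank, and its Hermite basis has the block shape $$\begin{bmatrix} T & X \\ 0 & H \end{bmatrix}$$ with $T \in \mathbb{Z}^{m\times m}$, $X\in\mathbb{Z}^{m\times n}$, $H \in \mathbb{Z}^{n \times n}$, where $\mathcal{L}(T) = \mathcal{L}(M) + \mathcal{L}(F)$ and $\mathcal{L}(H) = \mathcal{R}(M,F)$.
   Context: For an integer matrix $A$, $\mathcal{L}(A)$ denotes the lattice of all $\mathbb{Z}$-linear combinations of the rows of $A$; $\mathcal{L}(A)+\mathcal{L}(B)$ is the lattice generated by the rows of $A$ and $B$ together. For $M \in \mathbb{Z}^{\ell \times m}$ of full column rank and $F \in \mathbb{Z}^{n \times m}$, the integer relations lattice is $\mathcal{R}(M,F) := \{p \in \mathbb{Z}^{1\times n} : pF \in \mathcal{L}(M)\}$ (equivalently, $pF = qM$ for some integer row vector $q$). A full column rank integer matrix with $m$ columns is in (row) Hermite form if its first $m$ rows form an upper triangular matrix with positive diagonal entries $h_1,\dots,h_m$, every entry above the diagonal in column $j$ lies in $[0,h_j)$, and all remaining rows are zero. Every full column rank integer matrix $A$ has a unique Hermite form $WA$ with $W$ unimodular; the Hermite basis of $A$ is the nonsingular square matrix consisting of the nonzero rows of the Hermite form of $A$; it is the unique matrix in Hermite form whose row lattice equals $\mathcal{L}(A)$. *)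

theory Defs
  imports "Jordan_Normal_Form.Determinant"
begin

text \<open>Row vectors are represented as vectors of type int vec; the row lattice of A is
  the set of integer combinations of its rows, i.e. the vectors c^T A = A^T c.\<close>

definition row_lattice :: "int mat \<Rightarrow> int vec set" where
  "row_lattice A = {transpose_mat A *\<^sub>v c | c. c \<in> carrier_vec (dim_row A)}"

definition lattice_sum :: "int vec set \<Rightarrow> int vec set \<Rightarrow> int vec set" where
  "lattice_sum L1 L2 = {u + v | u v. u \<in> L1 \<and> v \<in> L2}"

definition full_column_rank :: "int mat \<Rightarrow> bool" where
  "full_column_rank A \<longleftrightarrow>
     (\<forall>v :: rat vec. v \<in> carrier_vec (dim_col A) \<longrightarrow>
        map_mat rat_of_int A *\<^sub>v v = 0\<^sub>v (dim_row A) \<longrightarrow> v = 0\<^sub>v (dim_col A))"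

definition relations_lattice :: "int mat \<Rightarrow> int mat \<Rightarrow> int vec set" where
  "relations_lattice M F =
     {p. p \<in> carrier_vec (dim_row F) \<and> transpose_mat F *\<^sub>v p \<in> row_lattice M}"

definition hermite_form :: "int mat \<Rightarrow> bool" where
  "hermite_form A \<longleftrightarrow>
     dim_col A \<le> dim_row A \<and>
     (\<forall>i j. i < dim_col A \<longrightarrow> j < i \<longrightarrow> A $$ (i, j) = 0) \<and>
     (\<forall>j < dim_col A. A $$ (j, j) > 0) \<and>
     (\<forall>i j. j < dim_col A \<longrightarrow> i < j \<longrightarrow> 0 \<le> A $$ (i, j) \<and> A $$ (i, j) < A $$ (j, j)) \<and>
     (\<forall>i j. dim_col A \<le> i \<longrightarrow> i < dim_row A \<longrightarrow> j < dim_col A \<longrightarrow> A $$ (i, j) = 0)"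

definition unimodular :: "int mat \<Rightarrow> bool" where
  "unimodular W \<longleftrightarrow> W \<in> carrier_mat (dim_row W) (dim_row W) \<and> (det W = 1 \<or> det W = -1)"

text \<open>B is the Hermite basis of A: the nonzero rows (the first m rows) of the Hermite
  form W A of A, with W unimodular.\<close>
definition hermite_basis :: "int mat \<Rightarrow> int mat \<Rightarrow> bool" where
  "hermite_basis A B \<longleftrightarrow>
     (\<exists>W. W \<in> carrier_mat (dim_row A) (dim_row A) \<and> unimodular W \<and>
          hermite_form (W * A) \<and>
          B = mat (dim_col A) (dim_col A) (\<lambda>(i, j). (W * A) $$ (i, j)))"

end

theory Submission
  imports Defs
begin

definition reach :: "int mat \<Rightarrow> int mat \<Rightarrow> bool" where
  "reach A B \<longleftrightarrow> (\<exists>W. W \<in> carrier_mat (dim_row A) (dim_row A) \<and> (det W = 1 \<or> det W = -1) \<and> B = W * A)"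

lemma reach_refl: "reach A A"
  unfolding reach_def by (rule exI[of _ "1\<^sub>m (dim_row A)"]) auto

lemma reach_dims: "reach A B \<Longrightarrow> dim_row B = dim_row A \<and> dim_col B = dim_col A"
  unfolding reach_def by auto

lemma reach_trans: assumes "reach A B" "reach B C" shows "reach A C"
proof -
  from assms(1) obtain W1 where W1: "W1 \<in> carrier_mat (dim_row A) (dim_row A)" "det W1 = 1 \<or> det W1 = -1" "B = W1 * A"
    unfolding reach_def by auto
  from assms(2) obtain W2 where W2: "W2 \<in> carrier_mat (dim_row B) (dim_row B)" "det W2 = 1 \<or> det W2 = -1" "C = W2 * B"
    unfolding reach_def by auto
  have dB: "dim_row B = dim_row A" using W1 by auto
  have A: "A \<in> carrier_mat (dim_row A) (dim_col A)" by auto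
  have "C = (W2 * W1) * A" using W1(1,3) W2(1,3) dB assoc_mult_mat[OF W2(1)[unfolded dB] W1(1) A] by metis
  moreover have "W2 * W1 \<in> carrier_mat (dim_row A) (dim_row A)" using W1(1) W2(1) dB by (metis mult_carrier_mat)
  moreover have "det (W2 * W1) = det W2 * det W1" using W1 W2 dB det_mult by metis
  ultimately show ?thesis unfolding reach_def using W1(2) W2(2) by auto
qed

lemma reach_swap: assumes "A \<in> carrier_mat r c" "k < r" "l < r" "k \<noteq> l"
  shows "reach A (swaprows k l A)"
proof -
  have "dim_row A = r" using assms(1) by simp
  thus ?thesis unfolding reach_def
    using swaprows_mat[OF assms(1-3)] det_swaprows_mat[OF assms(2-4)] swaprows_mat_carrier[of r k l]
    by metis
qed

lemma reach_add: assumes "A \<in> carrier_mat r c" "l < r" "k \<noteq> l"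
  shows "reach A (addrow a k l A)"
proof -
  have "dim_row A = r" using assms(1) by simp
  thus ?thesis unfolding reach_def
    using addrow_mat[OF assms(1,2)] det_addrow_mat[OF assms(3)] addrow_mat_carrier[of r a k l]
    by metis
qed

lemma reach_mult: assumes "A \<in> carrier_mat r c" "k < r"
  shows "reach A (multrow k (-1) A)"
proof -
  have "dim_row A = r" using assms(1) by simp
  thus ?thesis unfolding reach_def
    using multrow_mat[OF assms(1)] det_multrow_mat[OF assms(2)] multrow_mat_carrier[of r k "-1"]
    by metis
qed

lemma euclid2:
  assumes "A \<in> carrier_mat r c" "k < r" "i < r" "k \<noteq> i" "q < c"
  shows "\<exists>B. reach A B \<and> B $$ (i,q) = 0 \<and>
    (\<forall>p<r. p \<noteq> k \<longrightarrow> p \<noteq> i \<longrightarrow> (\<forall>j<c. B $$ (p,j) = A $$ (p,j))) \<and>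
    (\<forall>j<c. A $$ (k,j) = 0 \<and> A $$ (i,j) = 0 \<longrightarrow> B $$ (k,j) = 0 \<and> B $$ (i,j) = 0)"
  using assms(1)
proof (induction "nat \<bar>A $$ (i,q)\<bar>" arbitrary: A rule: less_induct)
  case less
  show ?case
  proof (cases "A $$ (i,q) = 0")
    case True
    then show ?thesis by (intro exI[of _ A]) (simp add: reach_refl)
  next
    case False
    define b where "b = A $$ (i,q)"
    define A1 where "A1 = addrow (-(A $$ (k,q) div b)) k i A"
    define A2 where "A2 = swaprows k i A1"
    have A1c: "A1 \<in> carrier_mat r c" unfolding A1_def using less.prems by simp
    have A2c: "A2 \<in> carrier_mat r c" unfolding A2_def using A1c by simp
    have r1: "reach A A1" unfolding A1_def by (rule reach_add[OF less.prems assms(3) assms(4)])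
    have r2: "reach A1 A2" unfolding A2_def by (rule reach_swap[OF A1c assms(2,3,4)])
    have A1e: "\<And>p j. p < r \<Longrightarrow> j < c \<Longrightarrow> A1 $$ (p,j) = (if p = k then -(A $$ (k,q) div b) * A $$ (i,j) + A $$ (k,j) else A $$ (p,j))"
      unfolding A1_def using less.prems by auto
    have A2e: "\<And>p j. p < r \<Longrightarrow> j < c \<Longrightarrow> A2 $$ (p,j) = (if p = k then A1 $$ (i,j) else if p = i then A1 $$ (k,j) else A1 $$ (p,j))"
      unfolding A2_def using A1c by auto
    have "A2 $$ (i,q) = -(A $$ (k,q) div b) * b + A $$ (k,q)"
      using A2e[OF assms(3,5)] A1e[OF assms(2,5)] assms(4) unfolding b_def by simp
    also have "\<dots> = A $$ (k,q) - A $$ (k,q) div b * b" by simp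
    also have "\<dots> = A $$ (k,q) mod b" by (rule minus_div_mult_eq_mod)
    finally have "A2 $$ (i,q) = A $$ (k,q) mod b" .
    moreover have "\<bar>A $$ (k,q) mod b\<bar> < \<bar>b\<bar>"
    proof (cases "b > 0")
      case True
      then show ?thesis using pos_mod_sign[OF True, of "A $$ (k,q)"] pos_mod_bound[OF True, of "A $$ (k,q)"] by simp
    next
      case f: False
      hence "b < 0" using False unfolding b_def by simp
      then show ?thesis using neg_mod_sign[OF \<open>b < 0\<close>, of "A $$ (k,q)"] neg_mod_bound[OF \<open>b < 0\<close>, of "A $$ (k,q)"] by simp
    qed
    ultimately have lt: "nat \<bar>A2 $$ (i,q)\<bar> < nat \<bar>A $$ (i,q)\<bar>" unfolding b_def by simp
    from less.hyps[OF lt A2c] obtain B where B: "reach A2 B" "B $$ (i,q) = 0"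
      "\<forall>p<r. p \<noteq> k \<longrightarrow> p \<noteq> i \<longrightarrow> (\<forall>j<c. B $$ (p,j) = A2 $$ (p,j))"
      "\<forall>j<c. A2 $$ (k,j) = 0 \<and> A2 $$ (i,j) = 0 \<longrightarrow> B $$ (k,j) = 0 \<and> B $$ (i,j) = 0" by blast
    have "reach A B" using reach_trans[OF reach_trans[OF r1 r2] B(1)] .
    moreover have "\<forall>p<r. p \<noteq> k \<longrightarrow> p \<noteq> i \<longrightarrow> (\<forall>j<c. B $$ (p,j) = A $$ (p,j))"
    proof (intro allI impI)
      fix p j assume h: "p < r" "p \<noteq> k" "p \<noteq> i" "j < c"
      have "B $$ (p,j) = A2 $$ (p,j)" using B(3) h by blast
      also have "\<dots> = A1 $$ (p,j)" using A2e[OF h(1,4)] h(2,3) by simp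
      also have "\<dots> = A $$ (p,j)" using A1e[OF h(1,4)] h(2) by simp
      finally show "B $$ (p,j) = A $$ (p,j)" .
    qed
    moreover have "\<forall>j<c. A $$ (k,j) = 0 \<and> A $$ (i,j) = 0 \<longrightarrow> B $$ (k,j) = 0 \<and> B $$ (i,j) = 0"
    proof (intro allI impI)
      fix j assume h: "j < c" "A $$ (k,j) = 0 \<and> A $$ (i,j) = 0"
      have "A1 $$ (k,j) = 0" "A1 $$ (i,j) = 0" using A1e[OF assms(2) h(1)] A1e[OF assms(3) h(1)] h(2) assms(4) by auto
      hence "A2 $$ (k,j) = 0 \<and> A2 $$ (i,j) = 0" using A2e[OF assms(2) h(1)] A2e[OF assms(3) h(1)] assms(4) by auto
      thus "B $$ (k,j) = 0 \<and> B $$ (i,j) = 0" using B(4) h(1) by blast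
    qed
    ultimately show ?thesis using B(2) by blast
  qed
qed

lemma reach_carrier: "reach A B \<Longrightarrow> A \<in> carrier_mat r c \<Longrightarrow> B \<in> carrier_mat r c"
  using reach_dims[of A B] by (metis carrier_matD(1) carrier_matD(2) carrier_matI)

lemma clear_below:
  assumes A: "A \<in> carrier_mat r c" and k: "k < r" "k < c"
  shows "\<exists>B. reach A B \<and> (\<forall>i. k < i \<longrightarrow> i < r \<longrightarrow> B $$ (i,k) = 0) \<and>
     (\<forall>p<k. \<forall>j<c. B $$ (p,j) = A $$ (p,j)) \<and>
     (\<forall>j<c. (\<forall>i'. k \<le> i' \<longrightarrow> i' < r \<longrightarrow> A $$ (i',j) = 0) \<longrightarrow> (\<forall>i. k \<le> i \<longrightarrow> i < r \<longrightarrow> B $$ (i,j) = 0))"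
proof -
  have "\<exists>B. reach A B \<and> (\<forall>i. k < i \<longrightarrow> i < r \<longrightarrow> i \<le> k + t \<longrightarrow> B $$ (i,k) = 0) \<and>
     (\<forall>p<k. \<forall>j<c. B $$ (p,j) = A $$ (p,j)) \<and>
     (\<forall>j<c. (\<forall>i'. k \<le> i' \<longrightarrow> i' < r \<longrightarrow> A $$ (i',j) = 0) \<longrightarrow> (\<forall>i. k \<le> i \<longrightarrow> i < r \<longrightarrow> B $$ (i,j) = 0))" for t
  proof (induction t)
    case 0
    show ?case by (intro exI[of _ A]) (auto simp: reach_refl)
  next
    case (Suc t)
    then obtain B where B: "reach A B" "\<forall>i. k < i \<longrightarrow> i < r \<longrightarrow> i \<le> k + t \<longrightarrow> B $$ (i,k) = 0"
     "\<forall>p<k. \<forall>j<c. B $$ (p,j) = A $$ (p,j)"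
     "\<forall>j<c. (\<forall>i'. k \<le> i' \<longrightarrow> i' < r \<longrightarrow> A $$ (i',j) = 0) \<longrightarrow> (\<forall>i. k \<le> i \<longrightarrow> i < r \<longrightarrow> B $$ (i,j) = 0)"
      by blast
    have Bc: "B \<in> carrier_mat r c" using reach_carrier[OF B(1) A] .
    show ?case
    proof (cases "k + Suc t < r")
      case False
      show ?thesis
      proof (intro exI[of _ B] conjI)
        show "\<forall>i. k < i \<longrightarrow> i < r \<longrightarrow> i \<le> k + Suc t \<longrightarrow> B $$ (i,k) = 0"
          using B(2) False by (metis le_SucE add_Suc_right linorder_not_le)
      qed (use B in auto)
    next
      case True
      define i0 where "i0 = k + Suc t"
      have i0: "i0 < r" "k \<noteq> i0" using True unfolding i0_def by auto
      from euclid2[OF Bc k(1) i0(1) i0(2) k(2)] obtain B' where B': "reach B B'" "B' $$ (i0,k) = 0"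
        "\<forall>p<r. p \<noteq> k \<longrightarrow> p \<noteq> i0 \<longrightarrow> (\<forall>j<c. B' $$ (p,j) = B $$ (p,j))"
        "\<forall>j<c. B $$ (k,j) = 0 \<and> B $$ (i0,j) = 0 \<longrightarrow> B' $$ (k,j) = 0 \<and> B' $$ (i0,j) = 0" by blast
      show ?thesis
      proof (intro exI[of _ B'] conjI allI impI)
        show "reach A B'" using reach_trans[OF B(1) B'(1)] .
      next
        fix i assume h: "k < i" "i < r" "i \<le> k + Suc t"
        show "B' $$ (i,k) = 0"
        proof (cases "i = i0")
          case True thus ?thesis using B'(2) by simp
        next
          case False
          hence "i \<le> k + t" using h unfolding i0_def by auto
          thus ?thesis using B(2) B'(3) h False k(2) by auto
        qed
      next
        fix p j assume h: "p < k" "j < c"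
        show "B' $$ (p,j) = A $$ (p,j)" using B(3) B'(3) h k(1) unfolding i0_def by auto
      next
        fix j i assume h: "j < c" "\<forall>i'. k \<le> i' \<longrightarrow> i' < r \<longrightarrow> A $$ (i',j) = 0" "k \<le> i" "i < r"
        have z: "\<forall>i. k \<le> i \<longrightarrow> i < r \<longrightarrow> B $$ (i,j) = 0" using B(4) h(1,2) by blast
        hence "B' $$ (k,j) = 0 \<and> B' $$ (i0,j) = 0" using B'(4) h(1) k(1) i0(1) unfolding i0_def by auto
        thus "B' $$ (i,j) = 0" using z B'(3) h by (metis le_eq_less_or_eq)
      qed
    qed
  qed
  from this[of r] show ?thesis by (metis add.commute less_imp_le trans_less_add1)
qed

lemma reduce_above:
  assumes A: "A \<in> carrier_mat r c" and k: "k < r" "k < c" and pos: "0 < A $$ (k,k)"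
    and z: "\<forall>j<k. A $$ (k,j) = 0"
  shows "\<exists>B. reach A B \<and> (\<forall>i<k. 0 \<le> B $$ (i,k) \<and> B $$ (i,k) < B $$ (k,k)) \<and>
     (\<forall>p<r. \<forall>j<c. (k \<le> p \<or> j < k) \<longrightarrow> B $$ (p,j) = A $$ (p,j))"
proof -
  have "\<exists>B. reach A B \<and> (\<forall>i<k. i < t \<longrightarrow> 0 \<le> B $$ (i,k) \<and> B $$ (i,k) < B $$ (k,k)) \<and>
     (\<forall>p<r. \<forall>j<c. (k \<le> p \<or> j < k) \<longrightarrow> B $$ (p,j) = A $$ (p,j))" for t
  proof (induction t)
    case 0
    show ?case by (intro exI[of _ A]) (auto simp: reach_refl)
  next
    case (Suc t)
    then obtain B where B: "reach A B" "\<forall>i<k. i < t \<longrightarrow> 0 \<le> B $$ (i,k) \<and> B $$ (i,k) < B $$ (k,k)"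
     "\<forall>p<r. \<forall>j<c. (k \<le> p \<or> j < k) \<longrightarrow> B $$ (p,j) = A $$ (p,j)" by blast
    have Bc: "B \<in> carrier_mat r c" using reach_carrier[OF B(1) A] .
    have Bkk: "B $$ (k,k) = A $$ (k,k)" using B(3) k by auto
    have Bkj: "\<forall>j<k. B $$ (k,j) = 0" using B(3) k z by auto
    show ?case
    proof (cases "t < k")
      case False
      show ?thesis
        by (intro exI[of _ B] conjI) (use B False in auto)
    next
      case True
      define d where "d = B $$ (k,k)"
      have d: "0 < d" using pos Bkk unfolding d_def by simp
      define B' where "B' = addrow (-(B $$ (t,k) div d)) t k B"
      have r1: "reach B B'" unfolding B'_def by (rule reach_add[OF Bc k(1)]) (use True in simp)
      have B'e: "\<And>p j. p < r \<Longrightarrow> j < c \<Longrightarrow> B' $$ (p,j) = (if p = t then -(B $$ (t,k) div d) * B $$ (k,j) + B $$ (t,j) else B $$ (p,j))"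
        unfolding B'_def using Bc by simp
      have tr: "t < r" using True k by simp
      have B'kk: "B' $$ (k,k) = d" using B'e[OF k] True unfolding d_def by simp
      have "B' $$ (t,k) = -(B $$ (t,k) div d) * d + B $$ (t,k)" using B'e[OF tr k(2)] unfolding d_def by simp
      also have "\<dots> = B $$ (t,k) - B $$ (t,k) div d * d" by simp
      also have "\<dots> = B $$ (t,k) mod d" by (rule minus_div_mult_eq_mod)
      finally have B'tk: "B' $$ (t,k) = B $$ (t,k) mod d" .
      show ?thesis
      proof (rule exI[of _ B'], intro conjI)
        show "reach A B'" using reach_trans[OF B(1) r1] .
      next
        show "\<forall>i<k. i < Suc t \<longrightarrow> 0 \<le> B' $$ (i,k) \<and> B' $$ (i,k) < B' $$ (k,k)"
        proof (intro allI impI)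
        fix i assume h: "i < k" "i < Suc t"
        show "0 \<le> B' $$ (i,k) \<and> B' $$ (i,k) < B' $$ (k,k)"
        proof (cases "i = t")
          case True
          thus ?thesis using B'tk B'kk pos_mod_sign[OF d] pos_mod_bound[OF d] by simp
        next
          case False
          hence "i < t" using h by simp
          moreover have "B' $$ (i,k) = B $$ (i,k)" using B'e[of i k] h k False by simp
          ultimately show ?thesis using B(2) h B'kk unfolding d_def by simp
        qed
        qed
      next
        show "\<forall>p<r. \<forall>j<c. (k \<le> p \<or> j < k) \<longrightarrow> B' $$ (p,j) = A $$ (p,j)"
        proof (intro allI impI)
        fix p j assume h: "p < r" "j < c" "k \<le> p \<or> j < k"
        have "B' $$ (p,j) = B $$ (p,j)"
        proof (cases "p = t")
          case True
          hence "j < k" using h \<open>t < k\<close> by simp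
          thus ?thesis using B'e[OF h(1,2)] Bkj True by simp
        next
          case False thus ?thesis using B'e[OF h(1,2)] by simp
        qed
        thus "B' $$ (p,j) = A $$ (p,j)" using B(3) h by simp
        qed
      qed
    qed
  qed
  from this[of k] show ?thesis by blast
qed

lemma reach_fcr: assumes "reach A B" "full_column_rank A" shows "full_column_rank B"
proof -
  from assms(1) obtain W where W: "W \<in> carrier_mat (dim_row A) (dim_row A)" "det W = 1 \<or> det W = -1" "B = W * A"
    unfolding reach_def by auto
  define r where "r = dim_row A"
  define c where "c = dim_col A"
  have A: "A \<in> carrier_mat r c" unfolding r_def c_def by auto
  have Wc: "W \<in> carrier_mat r r" using W(1) unfolding r_def .
  have dB: "dim_row B = r" "dim_col B = c" using W(3) Wc A by auto
  have mB: "map_mat rat_of_int B = map_mat rat_of_int W * map_mat rat_of_int A"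
    using of_int_hom.mat_hom_mult[OF Wc A] W(3) by simp
  have mWc: "map_mat rat_of_int W \<in> carrier_mat r r" using Wc by simp
  have mAc: "map_mat rat_of_int A \<in> carrier_mat r c" using A by simp
  have dW: "det (map_mat rat_of_int W) \<noteq> 0" using W(2) of_int_hom.hom_det[of W] by auto
  show ?thesis unfolding full_column_rank_def
  proof (intro allI impI)
    fix v :: "rat vec" assume v: "v \<in> carrier_vec (dim_col B)" "map_mat rat_of_int B *\<^sub>v v = 0\<^sub>v (dim_row B)"
    have vc: "v \<in> carrier_vec c" using v(1) dB by simp
    have "map_mat rat_of_int W *\<^sub>v (map_mat rat_of_int A *\<^sub>v v) = 0\<^sub>v r"
      using v(2) mB dB assoc_mult_mat_vec[OF mWc mAc vc] by simp
    moreover have "map_mat rat_of_int A *\<^sub>v v \<in> carrier_vec r" using mAc vc by simp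
    ultimately have "map_mat rat_of_int A *\<^sub>v v = 0\<^sub>v r"
      using det_0_iff_vec_prod_zero_field[OF mWc] dW by blast
    hence "v = 0\<^sub>v c" using assms(2) vc unfolding full_column_rank_def r_def c_def by simp
    thus "v = 0\<^sub>v (dim_col B)" using dB by simp
  qed
qed

definition Inv :: "int mat \<Rightarrow> nat \<Rightarrow> bool" where
  "Inv A k \<longleftrightarrow> (\<forall>j<k. \<forall>i. j < i \<longrightarrow> i < dim_row A \<longrightarrow> A $$ (i,j) = 0) \<and>
     (\<forall>j<k. j < dim_row A \<and> 0 < A $$ (j,j)) \<and>
     (\<forall>j<k. \<forall>i<j. 0 \<le> A $$ (i,j) \<and> A $$ (i,j) < A $$ (j,j))"

lemma kernel:
  assumes A: "A \<in> carrier_mat r c" and fcr: "full_column_rank A" and k: "k < c" and I: "Inv A k"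
    and z: "\<forall>i. k < i \<longrightarrow> i < r \<longrightarrow> A $$ (i,k) = 0"
  shows "k < r \<and> A $$ (k,k) \<noteq> 0"
proof (rule ccontr)
  assume neg: "\<not> (k < r \<and> A $$ (k,k) \<noteq> 0)"
  have dA: "dim_row A = r" "dim_col A = c" using A by auto
  have I1: "\<And>i j. j < k \<Longrightarrow> j < i \<Longrightarrow> i < r \<Longrightarrow> A $$ (i,j) = 0" using I dA unfolding Inv_def by auto
  define S :: "rat mat" where "S = mat (Suc k) (Suc k) (\<lambda>(i,j). if i < r then rat_of_int (A $$ (i,j)) else 0)"
  have Sc: "S \<in> carrier_mat (Suc k) (Suc k)" unfolding S_def by simp
  have Se: "\<And>i j. i < Suc k \<Longrightarrow> j < Suc k \<Longrightarrow> S $$ (i,j) = (if i < r then rat_of_int (A $$ (i,j)) else 0)"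
    unfolding S_def by simp
  have ut: "upper_triangular S"
  proof (rule upper_triangularI)
    fix i j assume h: "j < i" "i < dim_row S"
    hence "i < Suc k" unfolding S_def by simp
    thus "S $$ (i,j) = 0" using Se[of i j] h I1[of j i] by auto
  qed
  have Skk: "S $$ (k,k) = 0" using Se[of k k] neg by auto
  have "det S = (\<Prod> i = 0 ..< Suc k. S $$ (i,i))"
    using det_upper_triangular[OF ut Sc] prod_list_diag_prod[of S] Sc by simp
  also have "\<dots> = 0" using Skk by (intro prod_zero) auto
  finally obtain v where v: "v \<in> carrier_vec (Suc k)" "v \<noteq> 0\<^sub>v (Suc k)" "S *\<^sub>v v = 0\<^sub>v (Suc k)"
    using det_0_iff_vec_prod_zero_field[OF Sc] by blast
  define w where "w = vec c (\<lambda>j. if j \<le> k then v $ j else 0)"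
  have wc: "w \<in> carrier_vec c" unfolding w_def by simp
  have "w \<noteq> 0\<^sub>v c"
  proof
    assume w0: "w = 0\<^sub>v c"
    have "v = 0\<^sub>v (Suc k)"
    proof (rule eq_vecI)
      fix j assume "j < dim_vec (0\<^sub>v (Suc k) :: rat vec)"
      hence j: "j \<le> k" by simp
      hence "w $ j = v $ j" using k unfolding w_def by simp
      thus "v $ j = 0\<^sub>v (Suc k) $ j" using w0 j k by simp
    qed (use v(1) in simp)
    thus False using v(2) by simp
  qed
  moreover have "map_mat rat_of_int A *\<^sub>v w = 0\<^sub>v (dim_row A)"
  proof (rule eq_vecI)
    fix i assume "i < dim_vec (0\<^sub>v (dim_row A) :: rat vec)"
    hence i: "i < r" using dA by simp
    have "(map_mat rat_of_int A *\<^sub>v w) $ i = (\<Sum>j = 0..<c. rat_of_int (A $$ (i,j)) * w $ j)"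
      using i dA wc by (simp add: scalar_prod_def)
    also have "\<dots> = (\<Sum>j = 0..<Suc k. rat_of_int (A $$ (i,j)) * w $ j)"
      by (rule sum.mono_neutral_right) (use k in \<open>auto simp: w_def\<close>)
    also have "\<dots> = (\<Sum>j = 0..<Suc k. rat_of_int (A $$ (i,j)) * v $ j)"
      by (rule sum.cong) (use k in \<open>auto simp: w_def\<close>)
    also have "\<dots> = 0"
    proof (cases "i \<le> k")
      case True
      have "(S *\<^sub>v v) $ i = (\<Sum>j = 0..<Suc k. S $$ (i,j) * v $ j)"
        using True Sc v(1) by (simp add: scalar_prod_def)
      also have "\<dots> = (\<Sum>j = 0..<Suc k. rat_of_int (A $$ (i,j)) * v $ j)"
        by (rule sum.cong) (use Se True i in auto)
      finally show ?thesis using v(3) True by simp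
    next
      case False
      have "\<forall>j\<in>{0..<Suc k}. rat_of_int (A $$ (i,j)) * v $ j = 0"
      proof
        fix j assume "j \<in> {0..<Suc k}"
        hence "j < k \<or> j = k" by auto
        hence "A $$ (i,j) = 0" using I1[of j i] z i False by auto
        thus "rat_of_int (A $$ (i,j)) * v $ j = 0" by simp
      qed
      thus ?thesis by (rule sum.neutral)
    qed
    finally show "(map_mat rat_of_int A *\<^sub>v w) $ i = 0\<^sub>v (dim_row A) $ i" using i dA by simp
  qed simp
  ultimately show False using fcr wc dA unfolding full_column_rank_def by auto
qed

lemma step:
  assumes A: "A \<in> carrier_mat r c" and fcr: "full_column_rank A" and I: "Inv A k" and k: "k < c"
  shows "\<exists>B. reach A B \<and> Inv B (Suc k)"
proof (cases "k < r")
  case False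
  have "k < r" using kernel[OF A fcr k I] False by auto
  with False show ?thesis by simp
next
  case kr: True
  have dA: "dim_row A = r" "dim_col A = c" using A by auto
  from clear_below[OF A kr k] obtain A1 where A1: "reach A A1" "\<forall>i. k < i \<longrightarrow> i < r \<longrightarrow> A1 $$ (i,k) = 0"
     "\<forall>p<k. \<forall>j<c. A1 $$ (p,j) = A $$ (p,j)"
     "\<forall>j<c. (\<forall>i'. k \<le> i' \<longrightarrow> i' < r \<longrightarrow> A $$ (i',j) = 0) \<longrightarrow> (\<forall>i. k \<le> i \<longrightarrow> i < r \<longrightarrow> A1 $$ (i,j) = 0)"
    by blast
  have A1c: "A1 \<in> carrier_mat r c" using reach_carrier[OF A1(1) A] .
  have dA1: "dim_row A1 = r" "dim_col A1 = c" using A1c by auto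
  have IA1: "\<And>i j. j < k \<Longrightarrow> j < i \<Longrightarrow> i < r \<Longrightarrow> A $$ (i,j) = 0" using I dA unfolding Inv_def by auto
  have colz: "\<And>i j. j < k \<Longrightarrow> k \<le> i \<Longrightarrow> i < r \<Longrightarrow> A1 $$ (i,j) = 0"
  proof -
    fix i j assume h: "j < k" "k \<le> i" "i < r"
    have "\<forall>i'. k \<le> i' \<longrightarrow> i' < r \<longrightarrow> A $$ (i',j) = 0" using IA1 h(1) by auto
    thus "A1 $$ (i,j) = 0" using A1(4) h k by auto
  qed
  have I1: "Inv A1 k" unfolding Inv_def dA1
  proof (intro conjI allI impI)
    fix j i assume h: "j < k" "j < i" "i < r"
    show "A1 $$ (i,j) = 0"
    proof (cases "i < k")
      case True thus ?thesis using A1(3) IA1[OF h] h k by auto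
    next
      case False thus ?thesis using colz h by auto
    qed
  next
    fix j assume h: "j < k"
    show "j < r" using h kr by simp
    show "0 < A1 $$ (j,j)" using I h A1(3) k unfolding Inv_def by auto
  next
    fix j i assume h: "j < k" "i < j"
    show "0 \<le> A1 $$ (i,j)" "A1 $$ (i,j) < A1 $$ (j,j)" using I h A1(3) k unfolding Inv_def by auto
  qed
  have fcr1: "full_column_rank A1" using reach_fcr[OF A1(1) fcr] .
  have nz: "A1 $$ (k,k) \<noteq> 0" using kernel[OF A1c fcr1 k I1 A1(2)] by simp
  define A2 where "A2 = (if A1 $$ (k,k) < 0 then multrow k (-1) A1 else A1)"
  have r2: "reach A1 A2" unfolding A2_def using reach_mult[OF A1c kr] reach_refl by simp
  have A2c: "A2 \<in> carrier_mat r c" using reach_carrier[OF r2 A1c] .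
  have dA2: "dim_row A2 = r" "dim_col A2 = c" using A2c by auto
  have A2e: "\<And>p j. p < r \<Longrightarrow> j < c \<Longrightarrow> A2 $$ (p,j) = (if p = k \<and> A1 $$ (k,k) < 0 then - A1 $$ (p,j) else A1 $$ (p,j))"
    unfolding A2_def using A1c by auto
  have pos: "0 < A2 $$ (k,k)" using A2e[OF kr k] nz by auto
  have zk: "\<forall>j<k. A2 $$ (k,j) = 0" using A2e[OF kr] colz kr k by auto
  from reduce_above[OF A2c kr k pos zk] obtain B where B: "reach A2 B" "\<forall>i<k. 0 \<le> B $$ (i,k) \<and> B $$ (i,k) < B $$ (k,k)"
    "\<forall>p<r. \<forall>j<c. (k \<le> p \<or> j < k) \<longrightarrow> B $$ (p,j) = A2 $$ (p,j)" by blast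
  have Bc: "B \<in> carrier_mat r c" using reach_carrier[OF B(1) A2c] .
  have dB: "dim_row B = r" using Bc by auto
  have "Inv B (Suc k)" unfolding Inv_def dB
  proof (intro conjI allI impI)
    fix j i assume h: "j < Suc k" "j < i" "i < r"
    have jc: "j < c" using h k by simp
    have "k \<le> i \<or> j < k" using h by auto
    hence "B $$ (i,j) = A2 $$ (i,j)" using B(3) h(3) jc by blast
    also have "\<dots> = A1 $$ (i,j)"
    proof (cases "i = k")
      case True
      hence "j < k" using h by simp
      hence "A1 $$ (i,j) = 0" using colz[of j k] kr True by simp
      thus ?thesis using A2e[OF h(3) jc] True by simp
    qed (use A2e[OF h(3) jc] in simp)
    also have "\<dots> = 0"
    proof (cases "j < k")
      case True
      thus ?thesis using I1 h unfolding Inv_def dA1 by auto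
    next
      case False
      hence "j = k" using h by simp
      thus ?thesis using A1(2) h by auto
    qed
    finally show "B $$ (i,j) = 0" .
  next
    fix j assume h: "j < Suc k"
    show "j < r" using h kr by simp
    have jc: "j < c" using h k by simp
    show "0 < B $$ (j,j)"
    proof (cases "j < k")
      case True
      have "B $$ (j,j) = A2 $$ (j,j)" using B(3) True jc kr by auto
      also have "\<dots> = A1 $$ (j,j)" using A2e[of j j] True jc kr by auto
      finally show ?thesis using I1 True unfolding Inv_def by auto
    next
      case False
      hence "j = k" using h by simp
      thus ?thesis using B(3) pos kr k by auto
    qed
  next
    fix j i assume h: "j < Suc k" "i < j"
    have jc: "j < c" using h k by simp
    have res: "0 \<le> B $$ (i,j) \<and> B $$ (i,j) < B $$ (j,j)"
    proof (cases "j < k")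
      case True
      have ir: "i < r" "j < r" using h True kr by auto
      have "B $$ (i,j) = A1 $$ (i,j)" using B(3) A2e[of i j] True jc ir h by auto
      moreover have "B $$ (j,j) = A1 $$ (j,j)" using B(3) A2e[of j j] True jc ir by auto
      ultimately show ?thesis using I1 True h unfolding Inv_def by auto
    next
      case False
      hence "j = k" using h by simp
      thus ?thesis using B(2) h by auto
    qed
    thus "0 \<le> B $$ (i,j)" "B $$ (i,j) < B $$ (j,j)" by auto
  qed
  moreover have "reach A B" using reach_trans[OF reach_trans[OF A1(1) r2] B(1)] .
  ultimately show ?thesis by blast
qed

lemma hnf_reach:
  assumes A: "A \<in> carrier_mat r c" and fcr: "full_column_rank A"
  shows "\<exists>B. reach A B \<and> Inv B c"
proof -
  have "k \<le> c \<Longrightarrow> \<exists>B. reach A B \<and> Inv B k" for k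
  proof (induction k)
    case 0
    show ?case by (intro exI[of _ A]) (simp add: reach_refl Inv_def)
  next
    case (Suc k)
    then obtain B where B: "reach A B" "Inv B k" by auto
    have Bc: "B \<in> carrier_mat r c" using reach_carrier[OF B(1) A] .
    from step[OF Bc reach_fcr[OF B(1) fcr] B(2)] Suc.prems obtain B' where "reach B B'" "Inv B' (Suc k)" by auto
    thus ?case using reach_trans[OF B(1)] by blast
  qed
  thus ?thesis by simp
qed

lemma Inv_hermite:
  assumes A: "A \<in> carrier_mat r c" and I: "Inv A c"
  shows "hermite_form A"
proof -
  have dA: "dim_row A = r" "dim_col A = c" using A by auto
  have cr: "c \<le> r"
  proof (cases c)
    case 0 thus ?thesis by simp
  next
    case (Suc c') thus ?thesis using I dA unfolding Inv_def by auto
  qed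
  show ?thesis unfolding hermite_form_def dA
  proof (intro conjI allI impI)
    show "c \<le> r" by fact
  next
    fix i j assume "i < c" "j < i" thus "A $$ (i,j) = 0" using I cr dA unfolding Inv_def by auto
  next
    fix j assume "j < c" thus "0 < A $$ (j,j)" using I unfolding Inv_def by auto
  next
    fix i j assume "j < c" "i < j" thus "0 \<le> A $$ (i,j)" "A $$ (i,j) < A $$ (j,j)" using I unfolding Inv_def by auto
  next
    fix i j assume "c \<le> i" "i < r" "j < c" thus "A $$ (i,j) = 0" using I dA unfolding Inv_def by auto
  qed
qed

lemma hermite_exists:
  assumes A: "A \<in> carrier_mat r c" and fcr: "full_column_rank A"
  shows "\<exists>W. W \<in> carrier_mat r r \<and> unimodular W \<and> hermite_form (W * A)"
proof -
  from hnf_reach[OF A fcr] obtain B where B: "reach A B" "Inv B c" by blast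
  then obtain W where W: "W \<in> carrier_mat r r" "det W = 1 \<or> det W = -1" "B = W * A"
    using A unfolding reach_def by auto
  have "hermite_form B" using Inv_hermite[OF reach_carrier[OF B(1) A] B(2)] .
  moreover have "unimodular W" unfolding unimodular_def using W by auto
  ultimately show ?thesis using W by blast
qed

lemma rl_mem: "x \<in> row_lattice A \<longleftrightarrow> (\<exists>c \<in> carrier_vec (dim_row A). x = transpose_mat A *\<^sub>v c)"
  unfolding row_lattice_def by auto

lemma rl_mult_sub: assumes W: "W \<in> carrier_mat p r" and A: "A \<in> carrier_mat r c"
  shows "row_lattice (W * A) \<subseteq> row_lattice A"
proof
  fix x assume "x \<in> row_lattice (W * A)"
  then obtain y where y: "y \<in> carrier_vec p" "x = transpose_mat (W * A) *\<^sub>v y"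
    unfolding rl_mem using W by auto
  have WT: "transpose_mat W \<in> carrier_mat r p" using W by simp
  have AT: "transpose_mat A \<in> carrier_mat c r" using A by simp
  have "x = (transpose_mat A * transpose_mat W) *\<^sub>v y" using y(2) transpose_mult[OF W A] by simp
  also have "\<dots> = transpose_mat A *\<^sub>v (transpose_mat W *\<^sub>v y)" using assoc_mult_mat_vec[OF AT WT y(1)] .
  finally show "x \<in> row_lattice A" unfolding rl_mem using A WT y(1) by auto
qed

lemma rl_unimod: assumes W: "W \<in> carrier_mat r r" and d: "det W = 1 \<or> det W = -1" and A: "A \<in> carrier_mat r c"
  shows "row_lattice (W * A) = row_lattice A"
proof
  show "row_lattice (W * A) \<subseteq> row_lattice A" by (rule rl_mult_sub[OF W A])
  define V where "V = det W \<cdot>\<^sub>m adj_mat W"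
  have Vc: "V \<in> carrier_mat r r" unfolding V_def using adj_mat(1)[OF W] by simp
  have "V * W = det W \<cdot>\<^sub>m (adj_mat W * W)" unfolding V_def by (rule mult_smult_assoc_mat[OF adj_mat(1)[OF W] W])
  also have "\<dots> = det W \<cdot>\<^sub>m (det W \<cdot>\<^sub>m 1\<^sub>m r)" using adj_mat(3)[OF W] by simp
  also have "\<dots> = 1\<^sub>m r"
  proof (rule eq_matI)
    fix i j assume "i < dim_row (1\<^sub>m r :: int mat)" "j < dim_col (1\<^sub>m r :: int mat)"
    thus "(det W \<cdot>\<^sub>m (det W \<cdot>\<^sub>m 1\<^sub>m r)) $$ (i,j) = 1\<^sub>m r $$ (i,j)" using d by auto
  qed auto
  finally have VW: "V * W = 1\<^sub>m r" .
  have WA: "W * A \<in> carrier_mat r c" using W A by simp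
  have "A = V * (W * A)" using VW assoc_mult_mat[OF Vc W A] A by simp
  hence "row_lattice A = row_lattice (V * (W * A))" by simp
  also have "\<dots> \<subseteq> row_lattice (W * A)" by (rule rl_mult_sub[OF Vc WA])
  finally show "row_lattice A \<subseteq> row_lattice (W * A)" .
qed

lemma rl_zero_rows:
  assumes A: "A \<in> carrier_mat R N" and NR: "N \<le> R"
    and z: "\<And>i j. N \<le> i \<Longrightarrow> i < R \<Longrightarrow> j < N \<Longrightarrow> A $$ (i,j) = 0"
    and B: "B = mat N N (\<lambda>(i,j). A $$ (i,j))"
  shows "row_lattice B = row_lattice A"
proof
  show "row_lattice B \<subseteq> row_lattice A"
  proof
    fix x assume "x \<in> row_lattice B"
    then obtain c where c: "c \<in> carrier_vec N" "x = transpose_mat B *\<^sub>v c" unfolding rl_mem B by auto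
    define c' where "c' = vec R (\<lambda>i. if i < N then c $ i else 0)"
    have c'c: "c' \<in> carrier_vec R" unfolding c'_def by simp
    have "x = transpose_mat A *\<^sub>v c'"
    proof (rule eq_vecI)
      fix j assume "j < dim_vec (transpose_mat A *\<^sub>v c')"
      hence j: "j < N" using A by simp
      have "x $ j = (\<Sum>i = 0..<N. A $$ (i,j) * c $ i)"
        using c j unfolding B by (simp add: scalar_prod_def col_def)
      also have "\<dots> = (\<Sum>i = 0..<R. A $$ (i,j) * c' $ i)"
        by (rule sum.mono_neutral_cong_left) (use NR in \<open>auto simp: c'_def\<close>)
      also have "\<dots> = (transpose_mat A *\<^sub>v c') $ j"
        using A j c'c by (simp add: scalar_prod_def col_def)
      finally show "x $ j = (transpose_mat A *\<^sub>v c') $ j" .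
    qed (use c A B in simp)
    thus "x \<in> row_lattice A" unfolding rl_mem using c'c A by auto
  qed
next
  show "row_lattice A \<subseteq> row_lattice B"
  proof
    fix x assume "x \<in> row_lattice A"
    then obtain c where c: "c \<in> carrier_vec R" "x = transpose_mat A *\<^sub>v c" unfolding rl_mem using A by auto
    define c' where "c' = vec N (\<lambda>i. c $ i)"
    have c'c: "c' \<in> carrier_vec N" unfolding c'_def by simp
    have "x = transpose_mat B *\<^sub>v c'"
    proof (rule eq_vecI)
      fix j assume "j < dim_vec (transpose_mat B *\<^sub>v c')"
      hence j: "j < N" unfolding B by simp
      have "x $ j = (\<Sum>i = 0..<R. A $$ (i,j) * c $ i)"
        using c j A by (simp add: scalar_prod_def col_def)
      also have "\<dots> = (\<Sum>i = 0..<N. A $$ (i,j) * c' $ i)"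
        by (rule sum.mono_neutral_cong_right) (use NR z j in \<open>auto simp: c'_def\<close>)
      also have "\<dots> = (transpose_mat B *\<^sub>v c') $ j"
        using j c'c unfolding B by (simp add: scalar_prod_def col_def)
      finally show "x $ j = (transpose_mat B *\<^sub>v c') $ j" .
    qed (use c A B in simp)
    thus "x \<in> row_lattice B" unfolding rl_mem using c'c B by auto
  qed
qed

lemma zmv[simp]: "(v :: int vec) \<in> carrier_vec b \<Longrightarrow> 0\<^sub>m a b *\<^sub>v v = 0\<^sub>v a"
  by (rule eq_vecI) (auto simp: scalar_prod_def)

lemma neg_mv: assumes A: "(A :: int mat) \<in> carrier_mat nr nc" and c: "c \<in> carrier_vec nc" and u: "u \<in> carrier_vec nr"
  and e: "A *\<^sub>v c + u = 0\<^sub>v nr"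
  shows "u = A *\<^sub>v (-c)"
proof (rule eq_vecI)
  fix i assume "i < dim_vec (A *\<^sub>v (-c))"
  hence i: "i < nr" using A by simp
  have "(A *\<^sub>v c + u) $ i = 0" using e i by simp
  hence "u $ i = - (row A i \<bullet> c)" using i A u by simp
  also have "\<dots> = row A i \<bullet> (-c)" using c A i by (simp add: scalar_prod_def sum_negf)
  finally show "u $ i = (A *\<^sub>v (-c)) $ i" using i A by simp
qed (use A u in simp)

lemma zero_append: "0\<^sub>v (a + b) = (0\<^sub>v a :: int vec) @\<^sub>v 0\<^sub>v b"
  by (rule eq_vecI) auto

lemma zero_append_rat: "0\<^sub>v (a + b) = (0\<^sub>v a :: rat vec) @\<^sub>v 0\<^sub>v b"
  by (rule eq_vecI) auto

lemma rl_four_block: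
  assumes P: "P \<in> carrier_mat r1 c1" and Q: "Q \<in> carrier_mat r1 c2"
    and R: "R \<in> carrier_mat r2 c1" and S: "S \<in> carrier_mat r2 c2"
  shows "x \<in> row_lattice (four_block_mat P Q R S) \<longleftrightarrow>
    (\<exists>c\<in>carrier_vec r1. \<exists>d\<in>carrier_vec r2. x = (transpose_mat P *\<^sub>v c + transpose_mat R *\<^sub>v d) @\<^sub>v (transpose_mat Q *\<^sub>v c + transpose_mat S *\<^sub>v d))"
proof -
  have dr: "dim_row (four_block_mat P Q R S) = r1 + r2" using P S by simp
  have T: "transpose_mat (four_block_mat P Q R S) = four_block_mat (transpose_mat P) (transpose_mat R) (transpose_mat Q) (transpose_mat S)"
    by (rule transpose_four_block_mat[OF P Q R S])
  have PT: "transpose_mat P \<in> carrier_mat c1 r1" and RT: "transpose_mat R \<in> carrier_mat c1 r2"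
    and QT: "transpose_mat Q \<in> carrier_mat c2 r1" and ST: "transpose_mat S \<in> carrier_mat c2 r2"
    using P Q R S by auto
  show ?thesis
  proof
    assume "x \<in> row_lattice (four_block_mat P Q R S)"
    then obtain y where y: "y \<in> carrier_vec (r1 + r2)" "x = transpose_mat (four_block_mat P Q R S) *\<^sub>v y"
      unfolding rl_mem dr by auto
    define c where "c = vec_first y r1"
    define d where "d = vec_last y r2"
    have yy: "y = c @\<^sub>v d" unfolding c_def d_def using y(1) by simp
    have xe: "x = (transpose_mat P *\<^sub>v c + transpose_mat R *\<^sub>v d) @\<^sub>v (transpose_mat Q *\<^sub>v c + transpose_mat S *\<^sub>v d)"
      unfolding y(2) T yy by (rule four_block_mat_mult_vec[OF PT RT QT ST]) (auto simp: c_def d_def)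
    have "c \<in> carrier_vec r1" "d \<in> carrier_vec r2" unfolding c_def d_def by auto
    thus "\<exists>c\<in>carrier_vec r1. \<exists>d\<in>carrier_vec r2. x = (transpose_mat P *\<^sub>v c + transpose_mat R *\<^sub>v d) @\<^sub>v (transpose_mat Q *\<^sub>v c + transpose_mat S *\<^sub>v d)"
      using xe by blast
  next
    assume "\<exists>c\<in>carrier_vec r1. \<exists>d\<in>carrier_vec r2. x = (transpose_mat P *\<^sub>v c + transpose_mat R *\<^sub>v d) @\<^sub>v (transpose_mat Q *\<^sub>v c + transpose_mat S *\<^sub>v d)"
    then obtain c d where cd: "c \<in> carrier_vec r1" "d \<in> carrier_vec r2"
      "x = (transpose_mat P *\<^sub>v c + transpose_mat R *\<^sub>v d) @\<^sub>v (transpose_mat Q *\<^sub>v c + transpose_mat S *\<^sub>v d)" by blast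
    have "x = transpose_mat (four_block_mat P Q R S) *\<^sub>v (c @\<^sub>v d)"
      unfolding T cd(3) by (rule four_block_mat_mult_vec[OF PT RT QT ST cd(1,2), symmetric])
    moreover have "c @\<^sub>v d \<in> carrier_vec (r1 + r2)" using cd by simp
    ultimately show "x \<in> row_lattice (four_block_mat P Q R S)" unfolding rl_mem dr by blast
  qed
qed

theorem mainTheorem1:
  fixes M F :: "int mat" and l m n :: nat
  assumes "M \<in> carrier_mat l m" and "F \<in> carrier_mat n m"
    and "full_column_rank M"
  defines "K \<equiv> four_block_mat M (0\<^sub>m l n) F (1\<^sub>m n)"
  shows "full_column_rank K \<and>
    (\<exists>B. hermite_basis K B) \<and>
    (\<forall>B. hermite_basis K B \<longrightarrow>
       (\<exists>T X H. T \<in> carrier_mat m m \<and> X \<in> carrier_mat m n \<and> H \<in> carrier_mat n n \<and>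
          B = four_block_mat T X (0\<^sub>m n m) H \<and>
          row_lattice T = lattice_sum (row_lattice M) (row_lattice F) \<and>
          row_lattice H = relations_lattice M F))"
proof -
  note M = assms(1) and F = assms(2) and fcrM = assms(3)
  have Z: "(0\<^sub>m l n :: int mat) \<in> carrier_mat l n" by simp
  have O: "(1\<^sub>m n :: int mat) \<in> carrier_mat n n" by simp
  have Kc: "K \<in> carrier_mat (l + n) (m + n)" unfolding K_def using M O by simp
  have dK: "dim_row K = l + n" "dim_col K = m + n" using Kc by auto
  have fcrK: "full_column_rank K"
    unfolding full_column_rank_def dK
  proof (intro allI impI)
    fix v :: "rat vec" assume v: "v \<in> carrier_vec (m + n)" "map_mat rat_of_int K *\<^sub>v v = 0\<^sub>v (l + n)"
    define v1 where "v1 = vec_first v m"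
    define v2 where "v2 = vec_last v n"
    have v1c: "v1 \<in> carrier_vec m" and v2c: "v2 \<in> carrier_vec n" unfolding v1_def v2_def by auto
    have vv: "v = v1 @\<^sub>v v2" unfolding v1_def v2_def using v(1) by simp
    have mM: "map_mat rat_of_int M \<in> carrier_mat l m" and mF: "map_mat rat_of_int F \<in> carrier_mat n m" using M F by auto
    have mZ: "map_mat rat_of_int (0\<^sub>m l n) = (0\<^sub>m l n :: rat mat)" by (rule eq_matI) auto
    have mO: "map_mat rat_of_int (1\<^sub>m n) = (1\<^sub>m n :: rat mat)" by (rule eq_matI) auto
    have mK: "map_mat rat_of_int K = four_block_mat (map_mat rat_of_int M) (0\<^sub>m l n) (map_mat rat_of_int F) (1\<^sub>m n)"
      unfolding K_def using map_four_block_mat[OF M Z F O, of rat_of_int] mZ mO by simp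
    have z0: "(0\<^sub>m l n :: rat mat) *\<^sub>v v2 = 0\<^sub>v l" using v2c by (intro eq_vecI) (auto simp: scalar_prod_def)
    have "map_mat rat_of_int K *\<^sub>v v = (map_mat rat_of_int M *\<^sub>v v1 + 0\<^sub>m l n *\<^sub>v v2) @\<^sub>v (map_mat rat_of_int F *\<^sub>v v1 + 1\<^sub>m n *\<^sub>v v2)"
      unfolding mK vv by (rule four_block_mat_mult_vec[OF mM _ mF _ v1c v2c]) auto
    also have "\<dots> = (map_mat rat_of_int M *\<^sub>v v1) @\<^sub>v (map_mat rat_of_int F *\<^sub>v v1 + v2)"
      using z0 v2c mM v1c by simp
    finally have e: "(map_mat rat_of_int M *\<^sub>v v1) @\<^sub>v (map_mat rat_of_int F *\<^sub>v v1 + v2) = 0\<^sub>v l @\<^sub>v 0\<^sub>v n"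
      using v(2) by (metis zero_append_rat)
    have c1: "map_mat rat_of_int M *\<^sub>v v1 \<in> carrier_vec l" using mM v1c by (rule mult_mat_vec_carrier)
    have e1: "map_mat rat_of_int M *\<^sub>v v1 = 0\<^sub>v l" and e2: "map_mat rat_of_int F *\<^sub>v v1 + v2 = 0\<^sub>v n"
      using append_vec_eq[OF c1 zero_carrier_vec[of l]] e by auto
    have v10: "v1 = 0\<^sub>v m" using fcrM e1 v1c M unfolding full_column_rank_def by auto
    have "map_mat rat_of_int F *\<^sub>v v1 = 0\<^sub>v n" unfolding v10 using mF by (intro eq_vecI) (auto simp: scalar_prod_def)
    hence v20: "v2 = 0\<^sub>v n" using e2 v2c by simp
    show "v = 0\<^sub>v (m + n)" unfolding vv v10 v20 by (rule eq_vecI) auto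
  qed
  have ex: "\<exists>B. hermite_basis K B"
  proof -
    from hermite_exists[OF Kc fcrK] obtain W where W: "W \<in> carrier_mat (l+n) (l+n)" "unimodular W" "hermite_form (W * K)" by blast
    show ?thesis unfolding hermite_basis_def dK using W by blast
  qed
  have all: "\<forall>B. hermite_basis K B \<longrightarrow>
       (\<exists>T X H. T \<in> carrier_mat m m \<and> X \<in> carrier_mat m n \<and> H \<in> carrier_mat n n \<and>
          B = four_block_mat T X (0\<^sub>m n m) H \<and>
          row_lattice T = lattice_sum (row_lattice M) (row_lattice F) \<and>
          row_lattice H = relations_lattice M F)"
  proof (intro allI impI)
    fix B assume "hermite_basis K B"
    then obtain W where W: "W \<in> carrier_mat (l+n) (l+n)" "unimodular W" "hermite_form (W * K)"
      "B = mat (m+n) (m+n) (\<lambda>(i, j). (W * K) $$ (i, j))" unfolding hermite_basis_def dK by blast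
    define WK where "WK = W * K"
    have WKc: "WK \<in> carrier_mat (l+n) (m+n)" unfolding WK_def using W(1) Kc by simp
    have dWK: "dim_row WK = l + n" "dim_col WK = m + n" using WKc by auto
    have hf: "m + n \<le> l + n" "\<And>i j. i < m + n \<Longrightarrow> j < i \<Longrightarrow> WK $$ (i,j) = 0"
      "\<And>j. j < m + n \<Longrightarrow> 0 < WK $$ (j,j)"
      "\<And>i j. m + n \<le> i \<Longrightarrow> i < l + n \<Longrightarrow> j < m + n \<Longrightarrow> WK $$ (i,j) = 0"
      using W(3) unfolding hermite_form_def WK_def[symmetric] dWK by auto
    have dW: "det W = 1 \<or> det W = -1" using W(2) unfolding unimodular_def by auto
    have LBK: "row_lattice B = row_lattice K"
      using rl_zero_rows[OF WKc hf(1) hf(4) W(4)[folded WK_def]] rl_unimod[OF W(1) dW Kc] unfolding WK_def by simp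
    define T where "T = mat m m (\<lambda>(i,j). B $$ (i,j))"
    define X where "X = mat m n (\<lambda>(i,j). B $$ (i,m+j))"
    define H where "H = mat n n (\<lambda>(i,j). B $$ (m+i,m+j))"
    have Tc: "T \<in> carrier_mat m m" and Xc: "X \<in> carrier_mat m n" and Hc: "H \<in> carrier_mat n n"
      unfolding T_def X_def H_def by auto
    have Z2: "(0\<^sub>m n m :: int mat) \<in> carrier_mat n m" by simp
    have Be: "\<And>i j. i < m + n \<Longrightarrow> j < m + n \<Longrightarrow> B $$ (i,j) = WK $$ (i,j)" using W(4) unfolding WK_def by simp
    have Bdec: "B = four_block_mat T X (0\<^sub>m n m) H"
    proof (rule eq_matI)
      fix i j assume "i < dim_row (four_block_mat T X (0\<^sub>m n m) H)" "j < dim_col (four_block_mat T X (0\<^sub>m n m) H)"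
      hence ij: "i < m + n" "j < m + n" using Tc Hc by auto
      show "B $$ (i,j) = four_block_mat T X (0\<^sub>m n m) H $$ (i,j)"
      proof (cases "m \<le> i \<and> j < m")
        case True
        hence "B $$ (i,j) = 0" using Be[OF ij] hf(2)[of i j] ij by simp
        moreover have "i - m < n" using ij True by arith
        ultimately show ?thesis using True ij Tc Hc by simp
      next
        case False
        thus ?thesis using ij Tc Hc unfolding T_def X_def H_def by auto
      qed
    qed (use W(4) Tc Hc in auto)
    have Tnz: "\<And>a. a \<in> carrier_vec m \<Longrightarrow> transpose_mat T *\<^sub>v a = 0\<^sub>v m \<Longrightarrow> a = 0\<^sub>v m"
    proof -
      fix a assume a: "a \<in> carrier_vec m" "transpose_mat T *\<^sub>v a = 0\<^sub>v m"
      have ut: "upper_triangular T"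
      proof (rule upper_triangularI)
        fix i j assume "j < i" "i < dim_row T"
        thus "T $$ (i,j) = 0" using Tc Be hf(2) unfolding T_def by simp
      qed
      have "det T = (\<Prod>i = 0..<m. T $$ (i,i))" using det_upper_triangular[OF ut Tc] prod_list_diag_prod[of T] Tc by simp
      also have "\<dots> \<noteq> 0"
      proof -
        have "\<forall>i\<in>{0..<m}. T $$ (i,i) \<noteq> 0"
        proof
          fix i assume "i \<in> {0..<m}"
          hence "0 < T $$ (i,i)" using Be hf(3) unfolding T_def by simp
          thus "T $$ (i,i) \<noteq> 0" by simp
        qed
        thus ?thesis by (simp add: prod_zero_iff)
      qed
      finally have "det (transpose_mat T) \<noteq> 0" using det_transpose[OF Tc] by simp
      thus "a = 0\<^sub>v m" using det_0_iff_vec_prod_zero[of "transpose_mat T" m] Tc a by auto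
    qed
    have memK: "\<And>x. x \<in> row_lattice K \<longleftrightarrow> (\<exists>c\<in>carrier_vec l. \<exists>d\<in>carrier_vec n. x = (transpose_mat M *\<^sub>v c + transpose_mat F *\<^sub>v d) @\<^sub>v d)"
    proof -
      fix x
      have "x \<in> row_lattice K \<longleftrightarrow> (\<exists>c\<in>carrier_vec l. \<exists>d\<in>carrier_vec n. x = (transpose_mat M *\<^sub>v c + transpose_mat F *\<^sub>v d) @\<^sub>v (transpose_mat (0\<^sub>m l n) *\<^sub>v c + transpose_mat (1\<^sub>m n) *\<^sub>v d))"
        unfolding K_def by (rule rl_four_block[OF M Z F O])
      also have "\<dots> \<longleftrightarrow> (\<exists>c\<in>carrier_vec l. \<exists>d\<in>carrier_vec n. x = (transpose_mat M *\<^sub>v c + transpose_mat F *\<^sub>v d) @\<^sub>v d)"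
        by (intro bex_cong refl) simp
      finally show "?thesis x" .
    qed
    have memB: "\<And>x. x \<in> row_lattice B \<longleftrightarrow> (\<exists>a\<in>carrier_vec m. \<exists>b\<in>carrier_vec n. x = (transpose_mat T *\<^sub>v a) @\<^sub>v (transpose_mat X *\<^sub>v a + transpose_mat H *\<^sub>v b))"
    proof -
      fix x
      have "x \<in> row_lattice B \<longleftrightarrow> (\<exists>a\<in>carrier_vec m. \<exists>b\<in>carrier_vec n. x = (transpose_mat T *\<^sub>v a + transpose_mat (0\<^sub>m n m) *\<^sub>v b) @\<^sub>v (transpose_mat X *\<^sub>v a + transpose_mat H *\<^sub>v b))"
        unfolding Bdec by (rule rl_four_block[OF Tc Xc Z2 Hc])
      also have "\<dots> \<longleftrightarrow> (\<exists>a\<in>carrier_vec m. \<exists>b\<in>carrier_vec n. x = (transpose_mat T *\<^sub>v a) @\<^sub>v (transpose_mat X *\<^sub>v a + transpose_mat H *\<^sub>v b))"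
        by (intro bex_cong refl) (use Tc in simp)
      finally show "?thesis x" .
    qed
    have MT: "transpose_mat M \<in> carrier_mat m l" and FT: "transpose_mat F \<in> carrier_mat m n"
      and TT: "transpose_mat T \<in> carrier_mat m m" and XT: "transpose_mat X \<in> carrier_mat n m"
      and HT: "transpose_mat H \<in> carrier_mat n n" using M F Tc Xc Hc by auto
    have LT: "row_lattice T = lattice_sum (row_lattice M) (row_lattice F)"
    proof
      show "row_lattice T \<subseteq> lattice_sum (row_lattice M) (row_lattice F)"
      proof
        fix x assume "x \<in> row_lattice T"
        then obtain a where a: "a \<in> carrier_vec m" "x = transpose_mat T *\<^sub>v a" unfolding rl_mem using Tc by auto
        have "(transpose_mat T *\<^sub>v a) @\<^sub>v (transpose_mat X *\<^sub>v a + transpose_mat H *\<^sub>v 0\<^sub>v n) \<in> row_lattice B"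
          unfolding memB using a(1) zero_carrier_vec[of n] by blast
        then obtain c d where cd: "c \<in> carrier_vec l" "d \<in> carrier_vec n"
          "(transpose_mat T *\<^sub>v a) @\<^sub>v (transpose_mat X *\<^sub>v a + transpose_mat H *\<^sub>v 0\<^sub>v n) = (transpose_mat M *\<^sub>v c + transpose_mat F *\<^sub>v d) @\<^sub>v d"
          unfolding LBK memK by blast
        have "transpose_mat T *\<^sub>v a = transpose_mat M *\<^sub>v c + transpose_mat F *\<^sub>v d"
          using append_vec_eq[OF mult_mat_vec_carrier[OF TT a(1)] add_carrier_vec[OF mult_mat_vec_carrier[OF MT cd(1)] mult_mat_vec_carrier[OF FT cd(2)]]] cd(3) by blast
        moreover have "transpose_mat M *\<^sub>v c \<in> row_lattice M" unfolding rl_mem using cd(1) M by auto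
        moreover have "transpose_mat F *\<^sub>v d \<in> row_lattice F" unfolding rl_mem using cd(2) F by auto
        ultimately show "x \<in> lattice_sum (row_lattice M) (row_lattice F)" unfolding lattice_sum_def a(2) by blast
      qed
    next
      show "lattice_sum (row_lattice M) (row_lattice F) \<subseteq> row_lattice T"
      proof
        fix x assume "x \<in> lattice_sum (row_lattice M) (row_lattice F)"
        then obtain c d where cd: "c \<in> carrier_vec l" "d \<in> carrier_vec n"
          "x = transpose_mat M *\<^sub>v c + transpose_mat F *\<^sub>v d"
          unfolding lattice_sum_def rl_mem using M F by auto
        have "x @\<^sub>v d \<in> row_lattice B" unfolding LBK memK using cd by blast
        then obtain a b where ab: "a \<in> carrier_vec m" "b \<in> carrier_vec n"
          "x @\<^sub>v d = (transpose_mat T *\<^sub>v a) @\<^sub>v (transpose_mat X *\<^sub>v a + transpose_mat H *\<^sub>v b)"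
          unfolding memB by blast
        have "x = transpose_mat T *\<^sub>v a"
          using append_vec_eq[OF _ mult_mat_vec_carrier[OF TT ab(1)], of x] ab(3) cd(3) add_carrier_vec[OF mult_mat_vec_carrier[OF MT cd(1)] mult_mat_vec_carrier[OF FT cd(2)]] by blast
        thus "x \<in> row_lattice T" unfolding rl_mem using ab(1) Tc by auto
      qed
    qed
    have LH: "row_lattice H = relations_lattice M F"
    proof
      show "row_lattice H \<subseteq> relations_lattice M F"
      proof
        fix x assume "x \<in> row_lattice H"
        then obtain b where b: "b \<in> carrier_vec n" "x = transpose_mat H *\<^sub>v b" unfolding rl_mem using Hc by auto
        have xc: "x \<in> carrier_vec n" using b HT by simp
        have "(transpose_mat T *\<^sub>v 0\<^sub>v m) @\<^sub>v (transpose_mat X *\<^sub>v 0\<^sub>v m + transpose_mat H *\<^sub>v b) \<in> row_lattice B"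
          unfolding memB using b(1) zero_carrier_vec[of m] by blast
        moreover have "transpose_mat T *\<^sub>v 0\<^sub>v m = 0\<^sub>v m" "transpose_mat X *\<^sub>v 0\<^sub>v m + transpose_mat H *\<^sub>v b = x"
          using TT XT HT b by auto
        ultimately have "0\<^sub>v m @\<^sub>v x \<in> row_lattice K" unfolding LBK by simp
        then obtain c d where cd: "c \<in> carrier_vec l" "d \<in> carrier_vec n"
          "0\<^sub>v m @\<^sub>v x = (transpose_mat M *\<^sub>v c + transpose_mat F *\<^sub>v d) @\<^sub>v d"
          unfolding memK by blast
        have e: "0\<^sub>v m = transpose_mat M *\<^sub>v c + transpose_mat F *\<^sub>v d" "x = d"
          using append_vec_eq[OF zero_carrier_vec add_carrier_vec[OF mult_mat_vec_carrier[OF MT cd(1)] mult_mat_vec_carrier[OF FT cd(2)]]] cd(3) by blast+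
        have "transpose_mat F *\<^sub>v d = transpose_mat M *\<^sub>v (-c)"
          by (rule neg_mv[OF MT cd(1)]) (use e(1) FT cd(2) in auto)
        moreover have "-c \<in> carrier_vec l" using cd(1) by simp
        ultimately have "transpose_mat F *\<^sub>v x \<in> row_lattice M" unfolding rl_mem e(2) using M by auto
        thus "x \<in> relations_lattice M F" unfolding relations_lattice_def using xc F by auto
      qed
    next
      show "relations_lattice M F \<subseteq> row_lattice H"
      proof
        fix p assume "p \<in> relations_lattice M F"
        then obtain c where pc: "p \<in> carrier_vec n" "c \<in> carrier_vec l" "transpose_mat F *\<^sub>v p = transpose_mat M *\<^sub>v c"
          unfolding relations_lattice_def rl_mem using M F by auto
        have "transpose_mat M *\<^sub>v (-c) + transpose_mat F *\<^sub>v p = 0\<^sub>v m"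
        proof (rule eq_vecI)
          fix i assume "i < dim_vec (0\<^sub>v m :: int vec)"
          hence i: "i < m" by simp
          have "(transpose_mat F *\<^sub>v p) $ i = (transpose_mat M *\<^sub>v c) $ i" using pc(3) by simp
          moreover have "(transpose_mat M *\<^sub>v (-c)) $ i = - (transpose_mat M *\<^sub>v c) $ i"
            using i MT pc(2) by (simp add: scalar_prod_def sum_negf)
          ultimately show "(transpose_mat M *\<^sub>v (-c) + transpose_mat F *\<^sub>v p) $ i = 0\<^sub>v m $ i" using i MT FT by simp
        qed (use MT F in simp)
        moreover have "-c \<in> carrier_vec l" using pc(2) by simp
        ultimately have "0\<^sub>v m @\<^sub>v p \<in> row_lattice B" unfolding LBK memK using pc(1) by metis
        then obtain a b where ab: "a \<in> carrier_vec m" "b \<in> carrier_vec n"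
          "0\<^sub>v m @\<^sub>v p = (transpose_mat T *\<^sub>v a) @\<^sub>v (transpose_mat X *\<^sub>v a + transpose_mat H *\<^sub>v b)"
          unfolding memB by blast
        have e: "0\<^sub>v m = transpose_mat T *\<^sub>v a" "p = transpose_mat X *\<^sub>v a + transpose_mat H *\<^sub>v b"
          using append_vec_eq[OF zero_carrier_vec mult_mat_vec_carrier[OF TT ab(1)]] ab(3) by blast+
        have a0: "a = 0\<^sub>v m" using Tnz[OF ab(1)] e(1) by simp
        have "transpose_mat X *\<^sub>v 0\<^sub>v m = 0\<^sub>v n" by (rule eq_vecI) (use XT in \<open>auto simp: scalar_prod_def\<close>)
        hence "p = 0\<^sub>v n + transpose_mat H *\<^sub>v b" using e(2) unfolding a0 by simp
        hence "p = transpose_mat H *\<^sub>v b" using mult_mat_vec_carrier[OF HT ab(2)] by simp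
        thus "p \<in> row_lattice H" unfolding rl_mem using ab(2) Hc by auto
      qed
    qed
    show "\<exists>T X H. T \<in> carrier_mat m m \<and> X \<in> carrier_mat m n \<and> H \<in> carrier_mat n n \<and>
          B = four_block_mat T X (0\<^sub>m n m) H \<and>
          row_lattice T = lattice_sum (row_lattice M) (row_lattice F) \<and>
          row_lattice H = relations_lattice M F"
      using Tc Xc Hc Bdec LT LH by blast
  qed
  show ?thesis using fcrK ex all by blast
qed

end
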